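(* For every smooth $u:[0,1]\to\mathbb R$, every integer $m\ge1$, every integer $k\ge1$ and every $A\in\mathcal P_k$, $$\|Au\|_{L^\infty(0,1)}^2\lesssim\sum_{j=1}^2\sum_{B\in\mathcal P_{j+k}}\int_0^{3/4}(Bu)^2r^2\,dr+\sum_{j=0}^{m+1}\sum_{B\in\mathcal P_{j+k}}\int_{1/4}^1d^{2m}(Bu)^2\,dr.$$
   Context: $\bar\rho=\phi$ with $\phi\in C^k[0,1]$ (k large), $\phi>0$, $\phi'(0)=0$, $\gamma>1$, and $d(r)=\bar\rho(r)^{-\gamma}\int_r^1\ell\bar\rho(\ell)\,d\ell$. $D_rf=r^{-2}\partial_r(r^2f)$. Vector-field classes: $\mathcal P_0=\{1\}$; for $j\ge0$, $\mathcal P_{2j+2}=\{\prod_{k=1}^{j+1}\partial_rV_k: V_k\in\{D_r,\tfrac1r\}\}$ and $\mathcal P_{2j+1}=\{V_{j+1}\prod_{k=1}^{j}\partial_rV_k:V_k\in\{D_r,\tfrac1r\}\}$, where $\frac1r$ denotes multiplication by $1/r$ and products denote compositions of operators. *)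

theory Defs
  imports "HOL-Analysis.Analysis"
begin

(* C^n on a set S (one-sided derivatives at boundary points of S, last derivative continuous) *)
definition Ck_on :: "nat \<Rightarrow> real set \<Rightarrow> (real \<Rightarrow> real) \<Rightarrow> bool" where
  "Ck_on n S f \<longleftrightarrow> (\<exists>g :: nat \<Rightarrow> real \<Rightarrow> real. g 0 = f \<and>
      (\<forall>j<n. \<forall>x\<in>S. (g j has_real_derivative g (Suc j) x) (at x within S)) \<and>
      continuous_on S (g n))"

definition smooth_on :: "real set \<Rightarrow> (real \<Rightarrow> real) \<Rightarrow> bool" where
  "smooth_on S f \<longleftrightarrow> (\<forall>n. Ck_on n S f)"

definition dfun :: "(real \<Rightarrow> real) \<Rightarrow> real \<Rightarrow> real \<Rightarrow> real" where
  "dfun \<phi> \<gamma> r = \<phi> r powr (-\<gamma>) * integral {r..1} (\<lambda>l. l * \<phi> l)"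

definition dr_op :: "(real \<Rightarrow> real) \<Rightarrow> real \<Rightarrow> real" where
  "dr_op f = (\<lambda>r. deriv f r)"

definition Dr_op :: "(real \<Rightarrow> real) \<Rightarrow> real \<Rightarrow> real" where
  "Dr_op f = (\<lambda>r. deriv (\<lambda>s. s\<^sup>2 * f s) r / r\<^sup>2)"

definition Inv_op :: "(real \<Rightarrow> real) \<Rightarrow> real \<Rightarrow> real" where
  "Inv_op f = (\<lambda>r. f r / r)"

datatype vfield = VDr | VInv

fun vop :: "vfield \<Rightarrow> (real \<Rightarrow> real) \<Rightarrow> real \<Rightarrow> real" where
  "vop VDr = Dr_op"
| "vop VInv = Inv_op"

fun even_op :: "vfield list \<Rightarrow> (real \<Rightarrow> real) \<Rightarrow> real \<Rightarrow> real" where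
  "even_op [] = id"
| "even_op (v # vs) = dr_op \<circ> vop v \<circ> even_op vs"

definition Pclass :: "nat \<Rightarrow> ((real \<Rightarrow> real) \<Rightarrow> real \<Rightarrow> real) set" where
  "Pclass n = (if even n then {even_op vs | vs. length vs = n div 2}
               else {vop v \<circ> even_op vs | v vs. length vs = n div 2})"

end

theory Submission
  imports Defs "HOL-Analysis.Analysis"
begin


abbreviation "U \<equiv> {0<..<(1::real)}"

fun Cn :: "nat \<Rightarrow> (real \<Rightarrow> real) \<Rightarrow> bool" where
  "Cn 0 g = True"
| "Cn (Suc n) g = ((\<forall>x\<in>U. g differentiable (at x)) \<and> Cn n (deriv g))"

lemma Cn_mono: "Cn (Suc n) g \<Longrightarrow> Cn n g"
  by (induction n arbitrary: g) auto

lemma Cn_cong: "(\<And>x. x \<in> U \<Longrightarrow> g x = p x) \<Longrightarrow> Cn n g \<Longrightarrow> Cn n p"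
proof (induction n arbitrary: g p)
  case 0 then show ?case by simp
next
  case (Suc n)
  have ev: "\<And>x. x \<in> U \<Longrightarrow> eventually (\<lambda>y. g y = p y) (nhds x)"
  proof -
    fix x :: real assume "x \<in> U"
    then have "eventually (\<lambda>y. y \<in> U) (nhds x)" by (intro eventually_nhds_in_open) auto
    then show "eventually (\<lambda>y. g y = p y) (nhds x)" using Suc.prems(1) by (auto elim: eventually_mono)
  qed
  have d: "\<And>x. x \<in> U \<Longrightarrow> deriv g x = deriv p x"
    using ev by (intro deriv_cong_ev) auto
  have "\<And>x. x \<in> U \<Longrightarrow> p differentiable (at x)"
  proof -
    fix x assume x: "x \<in> U"
    then have "g differentiable (at x)" using Suc.prems by simp
    then obtain D where "(g has_field_derivative D) (at x)"
      using real_differentiable_def by blast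
    moreover have "(g has_field_derivative D) (at x) = (p has_field_derivative D) (at x)"
      using ev[OF x] Suc.prems(1)[OF x]
      by (intro has_field_derivative_cong_ev) (auto elim: eventually_mono)
    ultimately show "p differentiable (at x)" using real_differentiable_def by blast
  qed
  moreover have "Cn n (deriv p)" using Suc.IH[of "deriv g" "deriv p"] d Suc.prems by simp
  ultimately show ?case by simp
qed

lemma Cn_const: "Cn n (\<lambda>x. c)"
proof (induction n arbitrary: c)
  case (Suc n)
  have "deriv (\<lambda>x. c) = (\<lambda>x. 0)" by (rule ext) simp
  then show ?case using Suc by simp
qed simp

lemma Cn_add: "Cn n g \<Longrightarrow> Cn n p \<Longrightarrow> Cn n (\<lambda>x. g x + p x)"
proof (induction n arbitrary: g p)
  case (Suc n)
  have "\<And>x. x \<in> U \<Longrightarrow> deriv (\<lambda>x. g x + p x) x = deriv g x + deriv p x"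
    using Suc.prems by (intro deriv_add) (auto simp: real_differentiable_def field_differentiable_def)
  then show ?case using Suc.prems Suc.IH[of "deriv g" "deriv p"]
    by (auto intro: Cn_cong)
qed simp

lemma Cn_mult: "Cn n g \<Longrightarrow> Cn n p \<Longrightarrow> Cn n (\<lambda>x. g x * p x)"
proof (induction n arbitrary: g p)
  case (Suc n)
  have "\<And>x. x \<in> U \<Longrightarrow> deriv (\<lambda>x. g x * p x) x = deriv g x * p x + g x * deriv p x"
    using Suc.prems deriv_mult[of g _ p] by (auto simp: real_differentiable_def field_differentiable_def)
  moreover have "Cn n (\<lambda>x. deriv g x * p x + g x * deriv p x)"
    using Suc.prems Suc.IH[of "deriv g" p] Suc.IH[of g "deriv p"] Cn_mono[of n]
    by (intro Cn_add) auto
  ultimately show ?case using Suc.prems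
    by (auto intro: Cn_cong)
qed simp

lemma Cn_inv_pow: "Cn n (\<lambda>x. inverse x ^ k)"
proof (induction n arbitrary: k)
  case (Suc n)
  have "\<And>x. x \<in> U \<Longrightarrow> ((\<lambda>x. inverse x ^ k) has_field_derivative (- real k * inverse x ^ Suc k)) (at x)"
  proof -
    fix x :: real assume "x \<in> U"
    then have x: "x \<noteq> 0" by auto
    have "((\<lambda>x. inverse x ^ k) has_field_derivative (real k * (- (inverse x ^ Suc (Suc 0)) * inverse x ^ (k - Suc 0)))) (at x)"
      by (intro DERIV_power DERIV_inverse x)
    moreover have "real k * (- (inverse x ^ Suc (Suc 0)) * inverse x ^ (k - Suc 0)) = - real k * inverse x ^ Suc k"
      by (cases k) (simp_all add: algebra_simps)
    ultimately show "((\<lambda>x. inverse x ^ k) has_field_derivative (- real k * inverse x ^ Suc k)) (at x)"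
      by metis
  qed
  then have 1: "\<And>x. x \<in> U \<Longrightarrow> deriv (\<lambda>x. inverse x ^ k) x = - real k * inverse x ^ Suc k"
    "\<And>x. x \<in> U \<Longrightarrow> (\<lambda>x. inverse x ^ k) differentiable (at x)"
    by (auto intro: DERIV_imp_deriv simp: real_differentiable_def)
  have "Cn n (\<lambda>x. - real k * inverse x ^ Suc k)"
    using Suc.IH by (intro Cn_mult Cn_const)
  then show ?case using 1 by (auto intro: Cn_cong)
qed simp



definition Smooth :: "(real \<Rightarrow> real) \<Rightarrow> bool" where
  "Smooth g \<longleftrightarrow> (\<forall>n. Cn n g)"

lemma Smooth_deriv: "Smooth g \<Longrightarrow> Smooth (deriv g)"
  unfolding Smooth_def using Cn.simps(2) by blast

lemma Smooth_diff: "Smooth g \<Longrightarrow> x \<in> U \<Longrightarrow> (g has_real_derivative deriv g x) (at x)"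
  unfolding Smooth_def using Cn.simps(2)[of 0 g]
  by (auto simp: DERIV_deriv_iff_real_differentiable)

lemma Smooth_cont: "Smooth g \<Longrightarrow> continuous_on U g"
  by (intro continuous_at_imp_continuous_on ballI DERIV_isCont[OF Smooth_diff])

lemma Smooth_mult: "Smooth g \<Longrightarrow> Smooth p \<Longrightarrow> Smooth (\<lambda>x. g x * p x)"
  unfolding Smooth_def using Cn_mult by blast

lemma Smooth_inv_pow: "Smooth (\<lambda>x. inverse x ^ k)"
  unfolding Smooth_def using Cn_inv_pow by blast

lemma Smooth_id: "Smooth (\<lambda>x. x)"
proof -
  have "Cn n (\<lambda>x. x)" for n
  proof (induction n)
    case (Suc n)
    have "deriv (\<lambda>x. x) = (\<lambda>x::real. 1)" by (rule ext) simp
    then show ?case using Cn_const by simp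
  qed simp
  then show ?thesis unfolding Smooth_def by blast
qed

lemma Smooth_Inv: "Smooth g \<Longrightarrow> Smooth (Inv_op g)"
proof -
  assume "Smooth g"
  then have "Smooth (\<lambda>x. g x * inverse x ^ 1)" by (intro Smooth_mult Smooth_inv_pow)
  moreover have "Inv_op g = (\<lambda>x. g x * inverse x ^ 1)"
    unfolding Inv_op_def by (auto simp: field_simps)
  ultimately show ?thesis by simp
qed

lemma Smooth_dr: "Smooth g \<Longrightarrow> Smooth (dr_op g)"
  unfolding dr_op_def using Smooth_deriv by auto

lemma Smooth_Dr: "Smooth g \<Longrightarrow> Smooth (Dr_op g)"
proof -
  assume g: "Smooth g"
  have "Smooth (\<lambda>s. s * s * g s)" using g Smooth_id by (intro Smooth_mult) auto
  then have "Smooth (\<lambda>x. deriv (\<lambda>s. s\<^sup>2 * g s) x * inverse x ^ 2)"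
    by (intro Smooth_mult Smooth_inv_pow) (auto intro: Smooth_deriv simp: power2_eq_square)
  moreover have "Dr_op g = (\<lambda>x. deriv (\<lambda>s. s\<^sup>2 * g s) x * inverse x ^ 2)"
    unfolding Dr_op_def by (auto simp: field_simps)
  ultimately show ?thesis by simp
qed

lemma Smooth_vop: "Smooth g \<Longrightarrow> Smooth (vop v g)"
  by (cases v) (auto intro: Smooth_Dr Smooth_Inv)

lemma Smooth_even_op: "Smooth g \<Longrightarrow> Smooth (even_op vs g)"
  by (induction vs) (auto intro: Smooth_vop Smooth_dr)

lemma Dr_formula: "Smooth g \<Longrightarrow> x \<in> U \<Longrightarrow> Dr_op g x = deriv g x + 2 * g x / x"
proof -
  assume g: "Smooth g" and x: "x \<in> U"
  have "((\<lambda>s. s\<^sup>2 * g s) has_real_derivative (2 * x * g x + x\<^sup>2 * deriv g x)) (at x)"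
    using Smooth_diff[OF g x] by (auto intro!: derivative_eq_intros)
  then have "deriv (\<lambda>s. s\<^sup>2 * g s) x = 2 * x * g x + x\<^sup>2 * deriv g x" by (rule DERIV_imp_deriv)
  then show ?thesis using x unfolding Dr_op_def by (auto simp: field_simps power2_eq_square)
qed

lemma smooth_on_Smooth: "smooth_on {0..1} u \<Longrightarrow> Smooth u"
proof -
  assume s: "smooth_on {0..1} u"
  show ?thesis unfolding Smooth_def
  proof
    fix n
    from s obtain g where g0: "g 0 = u" and
      gd: "\<forall>j<n. \<forall>x\<in>{0..1}. (g j has_real_derivative g (Suc j) x) (at x within {0..1})"
      unfolding smooth_on_def Ck_on_def by blast
    have gd': "\<And>j x. j < n \<Longrightarrow> x \<in> U \<Longrightarrow> (g j has_real_derivative g (Suc j) x) (at x)"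
      using gd at_within_Icc_at[of 0 _ 1] by (metis greaterThanLessThan_iff atLeastAtMost_iff less_imp_le)
    have "\<forall>j. j + i \<le> n \<longrightarrow> Cn i (g j)" for i
    proof (induction i)
      case (Suc i)
      show ?case
      proof (intro allI impI)
        fix j assume j: "j + Suc i \<le> n"
        have "\<And>x. x \<in> U \<Longrightarrow> deriv (g j) x = g (Suc j) x"
          using gd' j by (intro DERIV_imp_deriv) auto
        moreover have "Cn i (g (Suc j))" using Suc j by auto
        ultimately have "Cn i (deriv (g j))" by (metis Cn_cong)
        moreover have "\<forall>x\<in>U. g j differentiable (at x)"
        proof
          fix x assume "x \<in> U"
          moreover have "j < n" using j by simp
          ultimately show "g j differentiable (at x)"
            using gd' unfolding real_differentiable_def by blast
        qed
        ultimately show "Cn (Suc i) (g j)" by simp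
      qed
    qed simp
    from this[of n] have "Cn n (g 0)" by simp
    then show "Cn n u" using g0 by simp
  qed
qed


lemma UNIV_vfield: "(UNIV :: vfield set) = {VDr, VInv}"
  using vfield.exhaust by auto

lemma finite_lists_vf: "finite {vs :: vfield list. length vs = n}"
proof -
  have "finite (UNIV :: vfield set)" by (simp add: UNIV_vfield)
  then show ?thesis using finite_lists_length_eq[of "UNIV :: vfield set" n] by simp
qed

lemma finite_Pclass: "finite (Pclass n)"
proof -
  have "{even_op vs | vs. length vs = n div 2} = even_op ` {vs. length vs = n div 2}" by auto
  moreover have "{vop v \<circ> even_op vs | v vs. length vs = n div 2}
      = (\<lambda>(v,vs). vop v \<circ> even_op vs) ` (UNIV \<times> {vs. length vs = n div 2})" by auto
  moreover have "finite ((UNIV :: vfield set) \<times> {vs :: vfield list. length vs = n div 2})"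
  proof (rule finite_cartesian_product)
    show "finite (UNIV :: vfield set)" by (simp add: UNIV_vfield)
  qed (rule finite_lists_vf)
  ultimately show ?thesis unfolding Pclass_def
    using finite_lists_vf by auto
qed

lemma Pclass_even: "length vs = n \<Longrightarrow> even_op vs \<in> Pclass (2 * n)"
  unfolding Pclass_def by auto

lemma Pclass_odd: "length vs = n \<Longrightarrow> vop v \<circ> even_op vs \<in> Pclass (2 * n + 1)"
  unfolding Pclass_def by auto

definition ch :: "vfield list \<Rightarrow> nat \<Rightarrow> (real \<Rightarrow> real) \<Rightarrow> real \<Rightarrow> real" where
  "ch L j = (if even j then even_op (replicate (j div 2) VDr @ L)
             else vop VDr \<circ> even_op (replicate (j div 2) VDr @ L))"

lemma ch_Pclass: "ch L j \<in> Pclass (j + 2 * length L)"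
proof (cases "even j")
  case True
  then have "j + 2 * length L = 2 * (length (replicate (j div 2) VDr @ L))" by auto
  then show ?thesis using True Pclass_even unfolding ch_def by metis
next
  case False
  then have "j + 2 * length L = 2 * (length (replicate (j div 2) VDr @ L)) + 1" by auto
  then show ?thesis using False Pclass_odd unfolding ch_def by metis
qed

lemma ch0: "ch L 0 = even_op L" unfolding ch_def by simp

definition bt :: "nat \<Rightarrow> real \<Rightarrow> real" where
  "bt j x = (if even j then - 2 / x else 0)"

lemma Smooth_ch: "Smooth u \<Longrightarrow> Smooth (ch L j u)"
  unfolding ch_def by (auto intro: Smooth_even_op Smooth_Dr)

lemma ch_deriv: "Smooth u \<Longrightarrow> x \<in> U \<Longrightarrow>
   deriv (ch L j u) x = ch L (Suc j) u x + bt j x * ch L j u x"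
proof (cases "even j")
  case True
  assume u: "Smooth u" and x: "x \<in> U"
  let ?E = "even_op (replicate (j div 2) VDr @ L) u"
  have "ch L j u = ?E" using True unfolding ch_def by simp
  moreover have "ch L (Suc j) u = Dr_op ?E" using True unfolding ch_def by simp
  moreover have "Dr_op ?E x = deriv ?E x + 2 * ?E x / x"
    using Dr_formula[OF Smooth_even_op[OF u] x] .
  ultimately show ?thesis using True unfolding bt_def by (simp add: field_simps)
next
  case False
  assume u: "Smooth u" and x: "x \<in> U"
  let ?l = "replicate (j div 2) VDr @ L"
  have "ch L j u = Dr_op (even_op ?l u)" using False unfolding ch_def by simp
  moreover have "Suc j div 2 = Suc (j div 2)" using False by presburger
  then have "ch L (Suc j) u = even_op (VDr # ?l) u" using False unfolding ch_def by simp
  moreover have "even_op (VDr # ?l) u = deriv (Dr_op (even_op ?l u))"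
    by (simp add: dr_op_def)
  ultimately show ?thesis using False unfolding bt_def by simp
qed

lemma ch_has_deriv: "Smooth u \<Longrightarrow> x \<in> U \<Longrightarrow>
   (ch L j u has_real_derivative (ch L (Suc j) u x + bt j x * ch L j u x)) (at x)"
  using Smooth_diff[OF Smooth_ch] ch_deriv by metis

lemma bt_bound: "x \<in> {1/4..<1} \<Longrightarrow> \<bar>bt j x\<bar> \<le> 8"
  unfolding bt_def by (auto simp: field_simps)


lemma ftc:
  fixes F F' :: "real \<Rightarrow> real"
  assumes "a \<le> b" "\<And>x. x \<in> {a..b} \<Longrightarrow> (F has_real_derivative F' x) (at x)"
  shows "(F' has_integral (F b - F a)) {a..b}"
  using assms(1)
proof (rule fundamental_theorem_of_calculus)
  fix x assume "x \<in> {a..b}"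
  then show "(F has_vector_derivative F' x) (at x within {a..b})"
    using assms(2) has_field_derivative_at_within has_real_derivative_iff_has_vector_derivative by blast
qed

lemma ftc_lower:
  fixes F F' G :: "real \<Rightarrow> real"
  assumes "a \<le> b" "\<And>x. x \<in> {a..b} \<Longrightarrow> (F has_real_derivative F' x) (at x)"
    "continuous_on {a..b} G" "\<And>x. x \<in> {a..b} \<Longrightarrow> G x \<le> F' x"
  shows "integral {a..b} G \<le> F b - F a"
proof -
  have "(G has_integral integral {a..b} G) {a..b}"
    using assms(3) integrable_continuous_interval integrable_integral by blast
  then show ?thesis using has_integral_le ftc[OF assms(1,2)] assms(4) by blast
qed

lemma ftc_upper:
  fixes F F' G :: "real \<Rightarrow> real"
  assumes "a \<le> b" "\<And>x. x \<in> {a..b} \<Longrightarrow> (F has_real_derivative F' x) (at x)"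
    "continuous_on {a..b} G" "\<And>x. x \<in> {a..b} \<Longrightarrow> F' x \<le> G x"
  shows "F b - F a \<le> integral {a..b} G"
proof -
  have "(G has_integral integral {a..b} G) {a..b}"
    using assms(3) integrable_continuous_interval integrable_integral by blast
  then show ?thesis using has_integral_le ftc[OF assms(1,2)] assms(4) by blast
qed

lemma minpoint:
  fixes F :: "real \<Rightarrow> real"
  assumes "a < b" "continuous_on {a..b} F"
  shows "\<exists>s\<in>{a..b}. (b - a) * F s \<le> integral {a..b} F"
proof -
  obtain s where s: "s \<in> {a..b}" "\<And>y. y \<in> {a..b} \<Longrightarrow> F s \<le> F y"
    using continuous_attains_inf[of "{a..b}" F] assms by auto
  have "integral {a..b} (\<lambda>x. F s) \<le> integral {a..b} F"
    using s assms by (intro integral_le integrable_continuous_interval) auto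
  then show ?thesis using s assms by auto
qed

lemma int_sub_le:
  fixes F :: "real \<Rightarrow> real"
  assumes "a \<le> c" "d \<le> b" "continuous_on {a..b} F" "\<And>x. x \<in> {a..b} \<Longrightarrow> 0 \<le> F x"
  shows "integral {c..d} F \<le> integral {a..b} F"
proof -
  have i: "F integrable_on {a..b}" using assms(3) integrable_continuous_interval by blast
  show ?thesis
  proof (cases "c \<le> d")
    case True
    then have "{c..d} \<subseteq> {a..b}" using assms by auto
    moreover have "F integrable_on {c..d}" using i integrable_on_subinterval calculation by blast
    ultimately show ?thesis using integral_subset_le i assms(4) by blast
  next
    case False
    then have "integral {c..d} F = 0" by simp
    then show ?thesis using integral_nonneg[OF i] assms(4) by simp
  qed
qed

lemma KL:
  fixes F G :: "real \<Rightarrow> real"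
  assumes "continuous_on {a..b} F" "\<And>x. x \<in> {a..b} \<Longrightarrow> 0 \<le> F x \<and> F x \<le> G x" "{a..b} \<subseteq> S"
  shows "ennreal (integral {a..b} F) \<le> (\<integral>\<^sup>+x. indicator S x * ennreal (G x) \<partial>lborel)"
proof -
  have "(F has_integral integral {a..b} F) {a..b}"
    using assms(1) integrable_continuous_interval integrable_integral by blast
  then have "(\<integral>\<^sup>+x. ennreal (F x) * indicator {a..b} x \<partial>lborel) = ennreal (integral {a..b} F)"
    using assms(2) by (intro nn_integral_has_integral_lebesgue') auto
  moreover have "(\<integral>\<^sup>+x. ennreal (F x) * indicator {a..b} x \<partial>lborel) \<le> (\<integral>\<^sup>+x. indicator S x * ennreal (G x) \<partial>lborel)"
  proof (rule nn_integral_mono)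
    fix x
    show "ennreal (F x) * indicator {a..b} x \<le> indicator S x * ennreal (G x)"
      using assms(2)[of x] assms(3) by (cases "x \<in> {a..b}") (auto simp: indicator_def)
  qed
  ultimately show ?thesis by simp
qed

lemma KLq:
  fixes F G :: "real \<Rightarrow> real"
  assumes "continuous_on {a..b} F" "\<And>x. x \<in> {a..b} \<Longrightarrow> 0 \<le> F x \<and> F x \<le> G x" "{a..b} \<subseteq> S"
    "(\<integral>\<^sup>+x. indicator S x * ennreal (G x) \<partial>lborel) \<le> ennreal q" "0 \<le> q"
  shows "integral {a..b} F \<le> q"
  using KL[OF assms(1,2,3)] assms(4,5) order_trans ennreal_le_iff by blast


lemma hardy_pt:
  fixes w g h b W :: real
  assumes "0 \<le> w" "\<bar>b\<bar> \<le> 8" "0 \<le> W"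
  shows "(real n + 1/2) * W * g\<^sup>2 - 4 * (W * w\<^sup>2) * h\<^sup>2 - 256 * (W * w\<^sup>2) * g\<^sup>2
     \<le> real (Suc n) * W * g\<^sup>2 - 2 * (W * w) * g * (h + b * g)"
proof -
  let ?D = "h + b * g"
  have b2: "b\<^sup>2 \<le> 64" using power_mono[OF assms(2) abs_ge_zero, of 2] by simp
  have "?D\<^sup>2 \<le> 2 * h\<^sup>2 + 2 * b\<^sup>2 * g\<^sup>2"
    using sum_squares_ge_zero[of "h - b*g" 0] by (simp add: power2_eq_square algebra_simps)
  also have "\<dots> \<le> 2 * h\<^sup>2 + 128 * g\<^sup>2"
    using mult_right_mono[OF b2, of "g\<^sup>2"] by simp
  finally have D2: "?D\<^sup>2 \<le> 2 * h\<^sup>2 + 128 * g\<^sup>2" .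
  have "0 \<le> (g - 2 * w * ?D)\<^sup>2" by simp
  then have "0 \<le> g\<^sup>2 - 4 * w * g * ?D + 4 * w\<^sup>2 * ?D\<^sup>2"
    by (simp add: power2_eq_square algebra_simps)
  then have i1: "0 \<le> g\<^sup>2 / 2 - 2 * w * g * ?D + 2 * w\<^sup>2 * ?D\<^sup>2" by linarith
  have i2: "2 * w\<^sup>2 * ?D\<^sup>2 \<le> 4 * w\<^sup>2 * h\<^sup>2 + 256 * w\<^sup>2 * g\<^sup>2"
    using mult_left_mono[OF D2, of "2 * w\<^sup>2"] by (simp add: algebra_simps)
  have "0 \<le> g\<^sup>2 / 2 - 2 * w * g * ?D + 4 * w\<^sup>2 * h\<^sup>2 + 256 * w\<^sup>2 * g\<^sup>2"
    using i1 i2 by linarith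
  then have "0 \<le> W * (g\<^sup>2 / 2 - 2 * w * g * ?D + 4 * w\<^sup>2 * h\<^sup>2 + 256 * w\<^sup>2 * g\<^sup>2)"
    using assms(3) by simp
  then show ?thesis by (simp add: algebra_simps)
qed


lemma contU: "continuous_on {0<..<1} (g :: real \<Rightarrow> real) \<Longrightarrow> 0 < a \<Longrightarrow> b < 1 \<Longrightarrow> continuous_on {a..b} g"
  by (erule continuous_on_subset) (force simp: subset_iff)

lemma hardy_step:
  fixes g h \<beta> :: "real \<Rightarrow> real"
  assumes d: "\<And>x. x \<in> {0<..<1} \<Longrightarrow> (g has_real_derivative (h x + \<beta> x * g x)) (at x)"
    and b: "\<And>x. x \<in> {1/4..<1} \<Longrightarrow> \<bar>\<beta> x\<bar> \<le> 8"
    and ch: "continuous_on {0<..<1} h"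
    and t: "1/2 \<le> t" "t < 1"
  shows "integral {1/4..t} (\<lambda>x. (1-x)^n * (g x)\<^sup>2)
     \<le> 9 * integral {1/4..1/2} (\<lambda>x. (g x)\<^sup>2)
       + 8 * integral {1/4..t} (\<lambda>x. (1-x)^(n+2) * (h x)\<^sup>2)
       + 512 * integral {1/4..t} (\<lambda>x. (1-x)^(n+2) * (g x)\<^sup>2)"
proof -
  have cg: "continuous_on {0<..<1} g"
    using d by (intro continuous_at_imp_continuous_on ballI DERIV_isCont) blast
  have cg': "continuous_on {1/4..t} g" and ch': "continuous_on {1/4..t} h"
    using cg ch t by (auto intro: contU)
  obtain s where s: "s \<in> {1/4..1/2}" "(1/2 - 1/4) * (g s)\<^sup>2 \<le> integral {1/4..1/2} (\<lambda>x. (g x)\<^sup>2)"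
  proof -
    have "continuous_on {1/4..1/2} g" by (rule contU[OF cg]) auto
    then have "continuous_on {1/4..1/2} (\<lambda>x. (g x)\<^sup>2)" by (intro continuous_intros)
    from minpoint[OF _ this] that show ?thesis by auto
  qed
  define Y where "Y = integral {1/4..1/2} (\<lambda>x. (g x)\<^sup>2)"
  define A2 where "A2 = integral {1/4..t} (\<lambda>x. (1-x)^(n+2) * (h x)\<^sup>2)"
  define A3 where "A3 = integral {1/4..t} (\<lambda>x. (1-x)^(n+2) * (g x)\<^sup>2)"
  define A1 where "A1 = integral {s..t} (\<lambda>x. (1-x)^n * (g x)\<^sup>2)"
  define A2s where "A2s = integral {s..t} (\<lambda>x. (1-x)^(n+2) * (h x)\<^sup>2)"
  define A3s where "A3s = integral {s..t} (\<lambda>x. (1-x)^(n+2) * (g x)\<^sup>2)"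
  have st: "s \<le> t" "1/4 \<le> s" using s t by auto
  have csub: "continuous_on {s..t} g" "continuous_on {s..t} h"
    using cg' ch' st by (auto intro: continuous_on_subset)
  let ?F = "\<lambda>x. - ((1-x)^(n+1) * (g x)\<^sup>2)"
  let ?F' = "\<lambda>x. real (Suc n) * (1-x)^n * (g x)\<^sup>2 - 2 * ((1-x)^n * (1-x)) * g x * (h x + \<beta> x * g x)"
  let ?G = "\<lambda>x. (real n + 1/2) * (1-x)^n * (g x)\<^sup>2 - 4 * ((1-x)^n * (1-x)\<^sup>2) * (h x)\<^sup>2
                 - 256 * ((1-x)^n * (1-x)\<^sup>2) * (g x)\<^sup>2"
  have F': "(?F has_real_derivative ?F' x) (at x)" if x: "x \<in> {s..t}" for x
  proof -
    have xU: "x \<in> {0<..<1}" using x st t by auto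
    have "((\<lambda>x. (1-x)^(n+1) * (g x)\<^sup>2) has_real_derivative
       ((1-x)^(n+1) * (real 2 * ((h x + \<beta> x * g x) * (g x)^(2 - Suc 0)))
        + real (n+1) * ((0 - 1) * (1-x)^(n+1 - Suc 0)) * (g x)\<^sup>2)) (at x)"
      by (intro DERIV_mult' DERIV_power DERIV_diff DERIV_const DERIV_ident d xU)
    then have "(?F has_real_derivative - ((1-x)^(n+1) * (real 2 * ((h x + \<beta> x * g x) * (g x)^(2 - Suc 0)))
        + real (n+1) * ((0 - 1) * (1-x)^(n+1 - Suc 0)) * (g x)\<^sup>2)) (at x)"
      by (rule DERIV_minus)
    moreover have "- ((1-x)^(n+1) * (real 2 * ((h x + \<beta> x * g x) * (g x)^(2 - Suc 0)))
        + real (n+1) * ((0 - 1) * (1-x)^(n+1 - Suc 0)) * (g x)\<^sup>2) = ?F' x"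
      by (simp add: algebra_simps)
    ultimately show ?thesis by metis
  qed
  have GF: "?G x \<le> ?F' x" if x: "x \<in> {s..t}" for x
  proof -
    have "\<bar>\<beta> x\<bar> \<le> 8" using b x st t by auto
    moreover have "0 \<le> 1 - x" using x t by auto
    ultimately show ?thesis using hardy_pt[of "1-x" "\<beta> x" "(1-x)^n" n "g x" "h x"] by simp
  qed
  have cG: "continuous_on {s..t} ?G" using csub by (intro continuous_intros)
  have "integral {s..t} ?G \<le> ?F t - ?F s"
    using ftc_lower[OF st(1) F' cG GF] by blast
  also have "\<dots> \<le> (g s)\<^sup>2"
  proof -
    have "(1-s)^(n+1) \<le> 1" using s by (intro power_le_one) auto
    then have "(1-s)^(n+1) * (g s)\<^sup>2 \<le> (g s)\<^sup>2" using mult_right_mono[of _ 1 "(g s)\<^sup>2"] by simp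
    moreover have "0 \<le> (1-t)^(n+1) * (g t)\<^sup>2" using t by simp
    ultimately show ?thesis by simp
  qed
  finally have I1: "integral {s..t} ?G \<le> (g s)\<^sup>2" .
  have pw: "\<And>x::real. (1-x)^n * (1-x)\<^sup>2 = (1-x)^(n+2)" by (simp only: power_add)
  have "integral {s..t} ?G = (real n + 1/2) * A1 - 4 * A2s - 256 * A3s"
  proof -
    have i1: "(\<lambda>x. (real n + 1/2) * (1-x)^n * (g x)\<^sup>2) integrable_on {s..t}"
      using csub by (intro integrable_continuous_interval continuous_intros)
    have i2: "(\<lambda>x. 4 * ((1-x)^n * (1-x)\<^sup>2) * (h x)\<^sup>2) integrable_on {s..t}"
      using csub by (intro integrable_continuous_interval continuous_intros)
    have i3: "(\<lambda>x. 256 * ((1-x)^n * (1-x)\<^sup>2) * (g x)\<^sup>2) integrable_on {s..t}"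
      using csub by (intro integrable_continuous_interval continuous_intros)
    have i12: "(\<lambda>x. (real n + 1/2) * (1-x)^n * (g x)\<^sup>2 - 4 * ((1-x)^n * (1-x)\<^sup>2) * (h x)\<^sup>2) integrable_on {s..t}"
      using csub by (intro integrable_continuous_interval continuous_intros)
    have "integral {s..t} ?G = integral {s..t} (\<lambda>x. (real n + 1/2) * (1-x)^n * (g x)\<^sup>2)
       - integral {s..t} (\<lambda>x. 4 * ((1-x)^n * (1-x)\<^sup>2) * (h x)\<^sup>2)
       - integral {s..t} (\<lambda>x. 256 * ((1-x)^n * (1-x)\<^sup>2) * (g x)\<^sup>2)"
      using integral_diff[OF i12 i3] integral_diff[OF i1 i2] by simp
    also have "\<dots> = (real n + 1/2) * A1 - 4 * A2s - 256 * A3s"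
      unfolding A1_def A2s_def A3s_def pw by (simp add: mult.assoc)
    finally show ?thesis .
  qed
  moreover have "A2s \<le> A2" unfolding A2s_def A2_def
  proof (rule int_sub_le)
    fix x :: real assume "x \<in> {1/4..t}"
    then have "0 \<le> 1 - x" using t by auto
    then show "0 \<le> (1-x)^(n+2) * (h x)\<^sup>2" by simp
  qed (use st ch' in \<open>auto intro!: continuous_intros\<close>)
  moreover have "A3s \<le> A3" unfolding A3s_def A3_def
  proof (rule int_sub_le)
    fix x :: real assume "x \<in> {1/4..t}"
    then have "0 \<le> 1 - x" using t by auto
    then show "0 \<le> (1-x)^(n+2) * (g x)\<^sup>2" by simp
  qed (use st cg' in \<open>auto intro!: continuous_intros\<close>)
  moreover have A1n: "0 \<le> A1" unfolding A1_def using csub t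
    by (intro integral_nonneg integrable_continuous_interval continuous_intros) auto
  moreover have "(g s)\<^sup>2 \<le> 4 * Y" using s(2) unfolding Y_def by simp
  moreover have "A1 / 2 \<le> (real n + 1/2) * A1"
  proof -
    have "0 \<le> real n * A1" using A1n by simp
    then show ?thesis by (simp add: algebra_simps)
  qed
  ultimately have A1b: "A1 \<le> 8 * Y + 8 * A2 + 512 * A3"
    using I1 by linarith
  have comb: "integral {1/4..s} (\<lambda>x. (1-x)^n * (g x)\<^sup>2) + A1 = integral {1/4..t} (\<lambda>x. (1-x)^n * (g x)\<^sup>2)"
    unfolding A1_def
    by (rule Henstock_Kurzweil_Integration.integral_combine)
       (use st cg' in \<open>auto intro!: integrable_continuous_interval continuous_intros\<close>)
  have "integral {1/4..s} (\<lambda>x. (1-x)^n * (g x)\<^sup>2) \<le> integral {1/4..s} (\<lambda>x. (g x)\<^sup>2)"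
  proof (rule integral_le)
    have "continuous_on {1/4..s} g" using cg' st by (auto intro: continuous_on_subset)
    then show "(\<lambda>x. (1-x)^n * (g x)\<^sup>2) integrable_on {1/4..s}" "(\<lambda>x. (g x)\<^sup>2) integrable_on {1/4..s}"
      by (auto intro!: integrable_continuous_interval continuous_intros)
    fix x assume "x \<in> {1/4..s}"
    then have "(1-x)^n \<le> 1" using s by (intro power_le_one) auto
    then show "(1-x)^n * (g x)\<^sup>2 \<le> (g x)\<^sup>2" using mult_right_mono[of _ 1 "(g x)\<^sup>2"] by simp
  qed
  also have "\<dots> \<le> Y" unfolding Y_def using s cg
    by (intro int_sub_le) (auto intro!: continuous_intros contU)
  finally show ?thesis using comb A1b unfolding Y_def A2_def A3_def by linarith
qed


lemma near1:
  fixes h \<beta> :: "nat \<Rightarrow> real \<Rightarrow> real" and m :: nat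
  assumes d: "\<And>j x. x \<in> {0<..<1} \<Longrightarrow> (h j has_real_derivative (h (Suc j) x + \<beta> j x * h j x)) (at x)"
    and b: "\<And>j x. x \<in> {1/4..<1} \<Longrightarrow> \<bar>\<beta> j x\<bar> \<le> 8"
    and base: "\<And>j t. j \<le> m+1 \<Longrightarrow> 1/2 \<le> t \<Longrightarrow> t < 1 \<Longrightarrow>
        integral {1/4..t} (\<lambda>x. (1-x)^(2*m) * (h j x)\<^sup>2) \<le> K0 * q"
    and K0: "0 \<le> K0" and q: "0 \<le> q"
    and r: "1/2 \<le> r" "r < 1"
  shows "(h 0 r)\<^sup>2 \<le> (4 * 4^m * K0 + 18 * K0 * (9*4^m+520)^m) * q"
proof -
  have cont: "continuous_on {0<..<1} (h j)" for j
    using d by (intro continuous_at_imp_continuous_on ballI DERIV_isCont) blast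
  define Bc :: real where "Bc = 9*4^m + 520"
  have Bc1: "1 \<le> Bc ^ i" for i unfolding Bc_def by (intro one_le_power) simp
  have Y: "integral {1/4..1/2} (\<lambda>x. (h j x)\<^sup>2) \<le> 4^m * K0 * q" if j: "j \<le> m+1" for j
  proof -
    have c: "continuous_on {1/4..1/2} (h j)" by (rule contU[OF cont]) auto
    have "integral {1/4..1/2} (\<lambda>x. (h j x)\<^sup>2 / 4^m) \<le> integral {1/4..1/2} (\<lambda>x. (1-x)^(2*m) * (h j x)\<^sup>2)"
    proof (rule integral_le)
      show "(\<lambda>x. (h j x)\<^sup>2 / 4^m) integrable_on {1/4..1/2}"
           "(\<lambda>x. (1-x)^(2*m) * (h j x)\<^sup>2) integrable_on {1/4..1/2}"
        using c by (auto intro!: integrable_continuous_interval continuous_intros)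
      fix x :: real assume x: "x \<in> {1/4..1/2}"
      have "(1/2::real)^2 \<le> (1-x)^2" using x by (intro power_mono) auto
      then have "1/4 \<le> (1-x)^2" by (simp add: power2_eq_square)
      then have "(1/4::real)^m \<le> ((1-x)^2)^m" by (intro power_mono) auto
      then have "1 / 4^m \<le> (1-x)^(2*m)" by (simp add: power_mult power_divide)
      then have "1 / 4^m * (h j x)\<^sup>2 \<le> (1-x)^(2*m) * (h j x)\<^sup>2" by (intro mult_right_mono) auto
      then show "(h j x)\<^sup>2 / 4^m \<le> (1-x)^(2*m) * (h j x)\<^sup>2" by simp
    qed
    also have "\<dots> \<le> K0 * q" using base[OF j] by simp
    finally have "integral {1/4..1/2} (\<lambda>x. (h j x)\<^sup>2) / 4^m \<le> K0 * q" by simp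
    then show ?thesis by (simp add: field_simps)
  qed
  have claim: "\<forall>j t. j + \<tau> \<le> m+1 \<longrightarrow> 1/2 \<le> t \<longrightarrow> t < 1 \<longrightarrow>
      integral {1/4..t} (\<lambda>x. (1-x)^(2*m - 2*\<tau>) * (h j x)\<^sup>2) \<le> K0 * Bc^\<tau> * q" if "\<tau> \<le> m" for \<tau>
    using that
  proof (induction \<tau>)
    case 0 then show ?case using base by simp
  next
    case (Suc \<tau>)
    show ?case
    proof (intro allI impI)
      fix j t assume j: "j + Suc \<tau> \<le> m+1" and t: "1/2 \<le> t" "t < (1::real)"
      define n where "n = 2*m - 2 * Suc \<tau>"
      have n2: "n + 2 = 2*m - 2*\<tau>" using Suc.prems unfolding n_def by simp
      have "integral {1/4..t} (\<lambda>x. (1-x)^n * (h j x)\<^sup>2)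
         \<le> 9 * integral {1/4..1/2} (\<lambda>x. (h j x)\<^sup>2)
         + 8 * integral {1/4..t} (\<lambda>x. (1-x)^(n+2) * (h (Suc j) x)\<^sup>2)
         + 512 * integral {1/4..t} (\<lambda>x. (1-x)^(n+2) * (h j x)\<^sup>2)"
        by (rule hardy_step[OF d b cont t])
      also have "\<dots> \<le> 9 * (4^m * K0 * q) + 8 * (K0 * Bc^\<tau> * q) + 512 * (K0 * Bc^\<tau> * q)"
      proof -
        have "integral {1/4..1/2} (\<lambda>x. (h j x)\<^sup>2) \<le> 4^m * K0 * q" using Y j by simp
        moreover have "integral {1/4..t} (\<lambda>x. (1-x)^(n+2) * (h (Suc j) x)\<^sup>2) \<le> K0 * Bc^\<tau> * q"
          using Suc j t unfolding n2 by simp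
        moreover have "integral {1/4..t} (\<lambda>x. (1-x)^(n+2) * (h j x)\<^sup>2) \<le> K0 * Bc^\<tau> * q"
          using Suc j t unfolding n2 by simp
        ultimately show ?thesis by linarith
      qed
      also have "\<dots> \<le> K0 * Bc^Suc \<tau> * q"
      proof -
        have "4^m * K0 * q \<le> 4^m * K0 * q * Bc^\<tau>"
          using Bc1[of \<tau>] K0 q mult_left_mono[of 1 "Bc^\<tau>" "4^m * K0 * q"] by simp
        then show ?thesis unfolding Bc_def by (simp add: algebra_simps)
      qed
      finally show "integral {1/4..t} (\<lambda>x. (1-x)^(2*m - 2*Suc \<tau>) * (h j x)\<^sup>2) \<le> K0 * Bc^Suc \<tau> * q"
        unfolding n_def .
    qed
  qed
  have X0: "integral {1/4..t} (\<lambda>x. (h j x)\<^sup>2) \<le> K0 * Bc^m * q" if "j \<le> 1" "1/2 \<le> t" "t < 1" for j t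
    using claim[of m] that by simp
  obtain s where s: "s \<in> {1/4..1/2}" "(1/2 - 1/4) * (h 0 s)\<^sup>2 \<le> integral {1/4..1/2} (\<lambda>x. (h 0 x)\<^sup>2)"
  proof -
    have "continuous_on {1/4..1/2} (h 0)" by (rule contU[OF cont]) auto
    then have "continuous_on {1/4..1/2} (\<lambda>x. (h 0 x)\<^sup>2)" by (intro continuous_intros)
    from minpoint[OF _ this] that show ?thesis by auto
  qed
  have sr: "s \<le> r" using s r by auto
  have c0: "continuous_on {s..r} (h 0)" "continuous_on {s..r} (h 1)"
    using s r by (auto intro: contU[OF cont])
  have "(h 0 r)\<^sup>2 - (h 0 s)\<^sup>2 \<le> integral {s..r} (\<lambda>x. 17 * (h 0 x)\<^sup>2 + (h 1 x)\<^sup>2)"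
  proof (rule ftc_upper[OF sr])
    fix x assume x: "x \<in> {s..r}"
    then have xU: "x \<in> {0<..<1}" using s r by auto
    show "((\<lambda>x. (h 0 x)\<^sup>2) has_real_derivative (real 2 * ((h 1 x + \<beta> 0 x * h 0 x) * (h 0 x)^(2 - Suc 0)))) (at x)"
      using d[OF xU, of 0] by (intro DERIV_power) simp
    have bb: "\<bar>\<beta> 0 x\<bar> \<le> 8" using b x s r by auto
    have "2 * (h 1 x * h 0 x) \<le> (h 0 x)\<^sup>2 + (h 1 x)\<^sup>2"
      using sum_squares_ge_zero[of "h 0 x - h 1 x" 0] by (simp add: power2_eq_square algebra_simps)
    moreover have "2 * (\<beta> 0 x * (h 0 x)\<^sup>2) \<le> 16 * (h 0 x)\<^sup>2"
    proof -
      have "\<beta> 0 x * (h 0 x)\<^sup>2 \<le> 8 * (h 0 x)\<^sup>2" using bb by (intro mult_right_mono) auto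
      then show ?thesis by simp
    qed
    ultimately show "real 2 * ((h 1 x + \<beta> 0 x * h 0 x) * (h 0 x)^(2 - Suc 0)) \<le> 17 * (h 0 x)\<^sup>2 + (h 1 x)\<^sup>2"
      by (simp add: algebra_simps power2_eq_square)
  qed (use c0 in \<open>auto intro!: continuous_intros\<close>)
  also have "\<dots> = 17 * integral {s..r} (\<lambda>x. (h 0 x)\<^sup>2) + integral {s..r} (\<lambda>x. (h 1 x)\<^sup>2)"
    using c0 by (subst integral_add) (auto intro!: integrable_continuous_interval continuous_intros)
  also have "\<dots> \<le> 17 * (K0 * Bc^m * q) + K0 * Bc^m * q"
  proof -
    have cc: "continuous_on {1/4..r} (h j)" for j by (rule contU[OF cont]) (use r in auto)
    have "integral {s..r} (\<lambda>x. (h 0 x)\<^sup>2) \<le> integral {1/4..r} (\<lambda>x. (h 0 x)\<^sup>2)"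
      using s cc[of 0] by (intro int_sub_le) (auto intro!: continuous_intros)
    moreover have "integral {s..r} (\<lambda>x. (h 1 x)\<^sup>2) \<le> integral {1/4..r} (\<lambda>x. (h 1 x)\<^sup>2)"
      using s cc[of 1] by (intro int_sub_le) (auto intro!: continuous_intros)
    ultimately show ?thesis using X0[of 0 r] X0[of 1 r] r by linarith
  qed
  finally have "(h 0 r)\<^sup>2 \<le> (h 0 s)\<^sup>2 + 18 * (K0 * Bc^m * q)" by linarith
  moreover have "(h 0 s)\<^sup>2 \<le> 4 * (4^m * K0 * q)" using s(2) Y[of 0] by simp
  ultimately show ?thesis unfolding Bc_def by (simp add: algebra_simps)
qed


lemma near0_even:
  fixes g p :: "real \<Rightarrow> real"
  assumes d: "\<And>x. x \<in> {0<..<1} \<Longrightarrow> (g has_real_derivative p x) (at x)"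
    and cp: "continuous_on {0<..<1} p"
    and r: "0 < r" "r \<le> s" "s < 1"
  shows "r * (g r)\<^sup>2 \<le> s * (g s)\<^sup>2 + integral {r..s} (\<lambda>x. x\<^sup>2 * (p x)\<^sup>2)"
proof -
  have "integral {r..s} (\<lambda>x. - (x\<^sup>2 * (p x)\<^sup>2)) \<le> s * (g s)\<^sup>2 - r * (g r)\<^sup>2"
  proof (rule ftc_lower[OF r(2)])
    fix x assume x: "x \<in> {r..s}"
    then have xU: "x \<in> {0<..<1}" using r by auto
    show "((\<lambda>x. x * (g x)\<^sup>2) has_real_derivative (x * (real 2 * (p x * (g x)^(2 - Suc 0))) + 1 * (g x)\<^sup>2)) (at x)"
      by (intro DERIV_mult' DERIV_ident DERIV_power d xU)
    have "0 \<le> (g x + x * p x)\<^sup>2" by simp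
    then show "- (x\<^sup>2 * (p x)\<^sup>2) \<le> x * (real 2 * (p x * (g x)^(2 - Suc 0))) + 1 * (g x)\<^sup>2"
      by (simp add: power2_eq_square algebra_simps)
  next
    show "continuous_on {r..s} (\<lambda>x. - (x\<^sup>2 * (p x)\<^sup>2))"
      using contU[OF cp] r by (auto intro!: continuous_intros)
  qed
  then show ?thesis by simp
qed

lemma near0_odd:
  fixes f p :: "real \<Rightarrow> real"
  assumes d: "\<And>x. x \<in> {0<..<1} \<Longrightarrow> (f has_real_derivative p x) (at x)"
    and cp: "continuous_on {0<..<1} p"
    and r: "0 < r" "r \<le> s" "s < 1"
  shows "(f r)\<^sup>2 \<le> 2 * (f s)\<^sup>2 + 4 * integral {r..s} (\<lambda>x. (p x)\<^sup>2)"
proof -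
  have cs: "continuous_on {r..s} p" using contU[OF cp] r by auto
  have "integral {r..s} (\<lambda>x. - 4 * (p x)\<^sup>2) \<le> (1 + s) * (f s)\<^sup>2 - (1 + r) * (f r)\<^sup>2"
  proof (rule ftc_lower[OF r(2)])
    fix x assume x: "x \<in> {r..s}"
    then have xU: "x \<in> {0<..<1}" using r by auto
    show "((\<lambda>x. (1 + x) * (f x)\<^sup>2) has_real_derivative ((1 + x) * (real 2 * (p x * (f x)^(2 - Suc 0))) + (0 + 1) * (f x)\<^sup>2)) (at x)"
      by (intro DERIV_mult' DERIV_add DERIV_const DERIV_ident DERIV_power d xU)
    have "0 \<le> (f x + (1 + x) * p x)\<^sup>2" by simp
    then have "- ((1 + x)\<^sup>2 * (p x)\<^sup>2) \<le> (1 + x) * (real 2 * (p x * (f x)^(2 - Suc 0))) + (0 + 1) * (f x)\<^sup>2"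
      by (simp add: power2_eq_square algebra_simps)
    moreover have "(1 + x)\<^sup>2 * (p x)\<^sup>2 \<le> 4 * (p x)\<^sup>2"
    proof -
      have "(1 + x)\<^sup>2 \<le> 2\<^sup>2" using xU by (intro power_mono) auto
      then show ?thesis by (intro mult_right_mono) auto
    qed
    ultimately show "- 4 * (p x)\<^sup>2 \<le> (1 + x) * (real 2 * (p x * (f x)^(2 - Suc 0))) + (0 + 1) * (f x)\<^sup>2"
      by linarith
  qed (use cs in \<open>auto intro!: continuous_intros\<close>)
  then have "(1 + r) * (f r)\<^sup>2 \<le> (1 + s) * (f s)\<^sup>2 + 4 * integral {r..s} (\<lambda>x. (p x)\<^sup>2)"
    by simp
  moreover have "(f r)\<^sup>2 \<le> (1 + r) * (f r)\<^sup>2" using r by (simp add: algebra_simps)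
  moreover have "(1 + s) * (f s)\<^sup>2 \<le> 2 * (f s)\<^sup>2" using r by (intro mult_right_mono) auto
  ultimately show ?thesis by linarith
qed


lemma dlow:
  assumes cphi: "continuous_on {0..1} \<phi>" and pos: "\<forall>r\<in>{0..1}. \<phi> r > 0" and g: "\<gamma> > 1"
  shows "\<exists>c>0. \<forall>x\<in>{1/4..1}. c * (1 - x) \<le> dfun \<phi> \<gamma> x"
proof -
  obtain xM where xM: "xM \<in> {0..1}" "\<And>y. y \<in> {0..1} \<Longrightarrow> \<phi> y \<le> \<phi> xM"
    using continuous_attains_sup[of "{0..1::real}" \<phi>] cphi by auto
  obtain xm where xm: "xm \<in> {0..1}" "\<And>y. y \<in> {0..1} \<Longrightarrow> \<phi> xm \<le> \<phi> y"
    using continuous_attains_inf[of "{0..1::real}" \<phi>] cphi by auto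
  define M where "M = \<phi> xM"
  define \<mu> where "\<mu> = \<phi> xm"
  have \<mu>: "0 < \<mu>" using pos xm unfolding \<mu>_def by auto
  have M: "0 < M" using pos xM unfolding M_def by auto
  define c where "c = M powr (-\<gamma>) * (\<mu> / 4)"
  have c: "0 < c" unfolding c_def using M \<mu> by simp
  have "\<forall>x\<in>{1/4..1}. c * (1 - x) \<le> dfun \<phi> \<gamma> x"
  proof
    fix x :: real assume x: "x \<in> {1/4..1}"
    have cx: "continuous_on {x..1} (\<lambda>l. l * \<phi> l)"
      using x by (intro continuous_intros continuous_on_subset[OF cphi]) auto
    have "integral {x..1} (\<lambda>l. \<mu> / 4) \<le> integral {x..1} (\<lambda>l. l * \<phi> l)"
    proof (rule integral_le)
      show "(\<lambda>l. l * \<phi> l) integrable_on {x..1}" using cx by (rule integrable_continuous_interval)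
      fix l assume l: "l \<in> {x..1}"
      then have "\<mu> \<le> \<phi> l" using xm x unfolding \<mu>_def by auto
      moreover have "1/4 \<le> l" using l x by auto
      ultimately have "(1/4) * \<mu> \<le> l * \<phi> l" using \<mu> by (intro mult_mono) auto
      then show "\<mu> / 4 \<le> l * \<phi> l" by simp
    qed auto
    then have I: "(1 - x) * (\<mu> / 4) \<le> integral {x..1} (\<lambda>l. l * \<phi> l)" using x by simp
    have P: "M powr (-\<gamma>) \<le> \<phi> x powr (-\<gamma>)"
      using g pos xM x unfolding M_def by (intro powr_mono2') auto
    have "c * (1 - x) = M powr (-\<gamma>) * ((1 - x) * (\<mu> / 4))" unfolding c_def by simp
    also have "\<dots> \<le> \<phi> x powr (-\<gamma>) * integral {x..1} (\<lambda>l. l * \<phi> l)"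
      using x \<mu> by (intro mult_mono P I) auto
    finally show "c * (1 - x) \<le> dfun \<phi> \<gamma> x" unfolding dfun_def .
  qed
  then show ?thesis using c by blast
qed


lemma base_T2:
  fixes hj dd :: "real \<Rightarrow> real"
  assumes ch: "continuous_on {0<..<1} hj" and c: "0 < c"
    and dl: "\<And>x. x \<in> {1/4..1} \<Longrightarrow> c * (1 - x) \<le> dd x"
    and T: "(\<integral>\<^sup>+x. indicator {1/4..1} x * ennreal ((dd x)^(2*m) * (hj x)\<^sup>2) \<partial>lborel) \<le> ennreal q"
    and q: "0 \<le> q" and t: "1/2 \<le> t" "t < 1"
  shows "integral {1/4..t} (\<lambda>x. (1-x)^(2*m) * (hj x)\<^sup>2) \<le> (1 / c^(2*m)) * q"
proof -
  have "integral {1/4..t} (\<lambda>x. c^(2*m) * ((1-x)^(2*m) * (hj x)\<^sup>2)) \<le> q"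
  proof (rule KLq[OF _ _ _ T q])
    show "continuous_on {1/4..t} (\<lambda>x. c^(2*m) * ((1-x)^(2*m) * (hj x)\<^sup>2))"
      using contU[OF ch] t by (auto intro!: continuous_intros)
    show "{1/4..t} \<subseteq> {1/4..1}" using t by auto
    fix x assume x: "x \<in> {1/4..t}"
    have w: "0 \<le> c * (1 - x)" using x t c by auto
    have "(c * (1 - x))^(2*m) \<le> (dd x)^(2*m)" using dl[of x] x t w by (intro power_mono) auto
    then have "c^(2*m) * (1-x)^(2*m) * (hj x)\<^sup>2 \<le> (dd x)^(2*m) * (hj x)\<^sup>2"
      by (intro mult_right_mono) (auto simp: power_mult_distrib)
    moreover have "0 \<le> c^(2*m) * ((1-x)^(2*m) * (hj x)\<^sup>2)" using x t c by auto
    ultimately show "0 \<le> c^(2*m) * ((1-x)^(2*m) * (hj x)\<^sup>2) \<and>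
        c^(2*m) * ((1-x)^(2*m) * (hj x)\<^sup>2) \<le> (dd x)^(2*m) * (hj x)\<^sup>2"
      by (simp add: mult.assoc)
  qed
  then have "c^(2*m) * integral {1/4..t} (\<lambda>x. (1-x)^(2*m) * (hj x)\<^sup>2) \<le> q" by simp
  then show ?thesis using c by (simp add: field_simps)
qed

lemma near1_app:
  fixes h \<beta> :: "nat \<Rightarrow> real \<Rightarrow> real" and dd :: "real \<Rightarrow> real"
  assumes d: "\<And>j x. x \<in> {0<..<1} \<Longrightarrow> (h j has_real_derivative (h (Suc j) x + \<beta> j x * h j x)) (at x)"
    and b: "\<And>j x. x \<in> {1/4..<1} \<Longrightarrow> \<bar>\<beta> j x\<bar> \<le> 8"
    and c: "0 < c" and dl: "\<And>x. x \<in> {1/4..1} \<Longrightarrow> c * (1 - x) \<le> dd x"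
    and T: "\<And>j. j \<le> m+1 \<Longrightarrow> (\<integral>\<^sup>+x. indicator {1/4..1} x * ennreal ((dd x)^(2*m) * (h j x)\<^sup>2) \<partial>lborel) \<le> ennreal q"
    and q: "0 \<le> q" and r: "1/2 \<le> r" "r < 1"
  shows "(h 0 r)\<^sup>2 \<le> (4 * 4^m * (1 / c^(2*m)) + 18 * (1 / c^(2*m)) * (9*4^m+520)^m) * q"
proof (rule near1[where h=h and \<beta>=\<beta> and m=m and q=q and r=r])
  fix j t assume j: "j \<le> m+1" and t: "1/2 \<le> t" "t < (1::real)"
  have "continuous_on {0<..<1} (h j)"
    using d by (intro continuous_at_imp_continuous_on ballI DERIV_isCont) blast
  then show "integral {1/4..t} (\<lambda>x. (1-x)^(2*m) * (h j x)\<^sup>2) \<le> (1 / c^(2*m)) * q"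
    using base_T2[OF _ c dl T[OF j] q t] by blast
qed (use c d b q r in auto)


lemma minpoint_sq:
  fixes g :: "real \<Rightarrow> real"
  assumes "a < b" "continuous_on {a..b} g"
  shows "\<exists>s\<in>{a..b}. (b - a) * (g s)\<^sup>2 \<le> integral {a..b} (\<lambda>x. (g x)\<^sup>2)"
proof -
  have "continuous_on {a..b} (\<lambda>x. (g x)\<^sup>2)" using assms(2) by (intro continuous_intros)
  then show ?thesis using minpoint[OF assms(1)] by blast
qed

definition C1c :: "real \<Rightarrow> nat \<Rightarrow> real" where
  "C1c c m = 4 * 4^m * (1 / c^(2*m)) + 18 * (1 / c^(2*m)) * (9*4^m+520)^m"

lemma C1c_nonneg: "0 < c \<Longrightarrow> 0 \<le> C1c c m"
  unfolding C1c_def by simp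

lemma main_even:
  fixes dd u :: "real \<Rightarrow> real"
  assumes u: "Smooth u" and k: "k = 2 * length vs"
    and c: "0 < c" and dl: "\<And>x. x \<in> {1/4..1} \<Longrightarrow> c * (1 - x) \<le> dd x"
    and q: "0 \<le> q"
    and T1: "\<And>j B. j \<in> {1..2::nat} \<Longrightarrow> B \<in> Pclass (j + k) \<Longrightarrow>
       (\<integral>\<^sup>+x. indicator {0..3/4} x * ennreal ((B u x)\<^sup>2 * x\<^sup>2) \<partial>lborel) \<le> ennreal q"
    and T2: "\<And>j B. j \<in> {0..m+1} \<Longrightarrow> B \<in> Pclass (j + k) \<Longrightarrow>
       (\<integral>\<^sup>+x. indicator {1/4..1} x * ennreal ((dd x)^(2*m) * (B u x)\<^sup>2) \<partial>lborel) \<le> ennreal q"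
    and r: "r \<in> {0<..<1}"
  shows "(even_op vs u r)\<^sup>2 \<le> (21 + 8 * (4/c)^(2*m) + C1c c m) * q"
proof (cases "1/2 \<le> r")
  case True
  have "(ch vs 0 u r)\<^sup>2 \<le> C1c c m * q"
    unfolding C1c_def
  proof (rule near1_app[where h="\<lambda>j. ch vs j u" and \<beta>=bt and dd=dd])
    fix j assume j: "j \<le> m+1"
    have "ch vs j \<in> Pclass (j + k)" using ch_Pclass k by simp
    then show "(\<integral>\<^sup>+x. indicator {1/4..1} x * ennreal ((dd x)^(2*m) * (ch vs j u x)\<^sup>2) \<partial>lborel) \<le> ennreal q"
      using T2[of j] j by auto
  qed (use u c dl q r True ch_has_deriv bt_bound in auto)
  moreover have "0 \<le> (21 + 8 * (4/c)^(2*m)) * q" using c q by simp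
  ultimately show ?thesis using ch0[of vs] by (simp add: algebra_simps)
next
  case False
  define g where "g = Inv_op (even_op vs u)"
  define p where "p = deriv g"
  have sg: "Smooth g" unfolding g_def using u by (intro Smooth_Inv Smooth_even_op)
  have dg: "\<And>x. x \<in> {0<..<1} \<Longrightarrow> (g has_real_derivative p x) (at x)"
    unfolding p_def using Smooth_diff[OF sg] by blast
  have cp: "continuous_on {0<..<1} p" unfolding p_def using Smooth_cont[OF Smooth_deriv[OF sg]] .
  have cg: "continuous_on {1/2..3/4} g" using Smooth_cont[OF sg] by (rule contU) auto
  obtain s where s: "s \<in> {1/2..3/4}" "(3/4 - 1/2) * (g s)\<^sup>2 \<le> integral {1/2..3/4} (\<lambda>x. (g x)\<^sup>2)"
    using minpoint_sq[OF _ cg] by auto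
  have rs: "0 < r" "r \<le> s" "s < 1" using r s False by auto
  have main: "r * (g r)\<^sup>2 \<le> s * (g s)\<^sup>2 + integral {r..s} (\<lambda>x. x\<^sup>2 * (p x)\<^sup>2)"
    by (rule near0_even[OF dg cp rs])
  have I1: "integral {r..s} (\<lambda>x. x\<^sup>2 * (p x)\<^sup>2) \<le> q"
  proof (rule KLq[where S="{0..3/4}" and G="\<lambda>x. (even_op (VInv # vs) u x)\<^sup>2 * x\<^sup>2"])
    show "continuous_on {r..s} (\<lambda>x. x\<^sup>2 * (p x)\<^sup>2)"
      using contU[OF cp] rs by (auto intro!: continuous_intros)
    have "even_op (VInv # vs) u = p" unfolding p_def g_def by (simp add: dr_op_def)
    then show "\<And>x. x \<in> {r..s} \<Longrightarrow> 0 \<le> x\<^sup>2 * (p x)\<^sup>2 \<and> x\<^sup>2 * (p x)\<^sup>2 \<le> (even_op (VInv # vs) u x)\<^sup>2 * x\<^sup>2"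
      by simp
    show "{r..s} \<subseteq> {0..3/4}" using rs s by auto
    have Bm: "even_op (VInv # vs) \<in> Pclass (2 + k)" using Pclass_even[of "VInv # vs"] k by simp
    show "(\<integral>\<^sup>+x. indicator {0..3/4} x * ennreal ((even_op (VInv # vs) u x)\<^sup>2 * x\<^sup>2) \<partial>lborel) \<le> ennreal q"
      by (rule T1[of 2 "even_op (VInv # vs)"]) (use Bm in auto)
  qed (rule q)
  have I2: "integral {1/2..3/4} (\<lambda>x. (g x)\<^sup>2 / 4) \<le> q"
  proof (rule KLq[where S="{0..3/4}" and G="\<lambda>x. ((vop VInv \<circ> even_op vs) u x)\<^sup>2 * x\<^sup>2"])
    show "continuous_on {1/2..3/4} (\<lambda>x. (g x)\<^sup>2 / 4)" using cg by (auto intro!: continuous_intros)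
    fix x :: real assume x: "x \<in> {1/2..3/4}"
    have "(1/2)\<^sup>2 \<le> x\<^sup>2" using x by (intro power_mono) auto
    then have "(g x)\<^sup>2 * (1/4) \<le> (g x)\<^sup>2 * x\<^sup>2" by (intro mult_left_mono) (auto simp: power2_eq_square)
    moreover have "(vop VInv \<circ> even_op vs) u x = g x" unfolding g_def by simp
    ultimately show "0 \<le> (g x)\<^sup>2 / 4 \<and> (g x)\<^sup>2 / 4 \<le> ((vop VInv \<circ> even_op vs) u x)\<^sup>2 * x\<^sup>2" by simp
  next
    show "{1/2..3/4} \<subseteq> {0..3/4::real}" by auto
    have Bm: "vop VInv \<circ> even_op vs \<in> Pclass (1 + k)" using Pclass_odd[of vs "length vs" VInv] k by (simp del: vop.simps)
    show "(\<integral>\<^sup>+x. indicator {0..3/4} x * ennreal (((vop VInv \<circ> even_op vs) u x)\<^sup>2 * x\<^sup>2) \<partial>lborel) \<le> ennreal q"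
      by (rule T1[of 1 "vop VInv \<circ> even_op vs"]) (use Bm in auto)
  qed (rule q)
  have gs: "(g s)\<^sup>2 \<le> 16 * q" using s(2) I2 by simp
  have "s * (g s)\<^sup>2 \<le> (g s)\<^sup>2" using rs by (intro mult_left_le_one_le) auto
  have fr: "even_op vs u r = r * g r" unfolding g_def Inv_op_def using rs by simp
  have "(even_op vs u r)\<^sup>2 \<le> r * (g r)\<^sup>2"
  proof -
    have "r * (r * (g r)\<^sup>2) \<le> r * (g r)\<^sup>2" using rs r by (intro mult_left_le_one_le) auto
    then show ?thesis unfolding fr by (simp add: power2_eq_square algebra_simps)
  qed
  then have "(even_op vs u r)\<^sup>2 \<le> 17 * q"
    using main I1 gs \<open>s * (g s)\<^sup>2 \<le> (g s)\<^sup>2\<close> by linarith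
  moreover have "0 \<le> (4 + 8 * (4/c)^(2*m) + C1c c m) * q" using c q C1c_nonneg[OF c] by simp
  ultimately show ?thesis by (simp add: algebra_simps)
qed


lemma main_odd:
  fixes dd u :: "real \<Rightarrow> real"
  assumes u: "Smooth u" and k: "k = 2 * length vs + 1"
    and c: "0 < c" and dl: "\<And>x. x \<in> {1/4..1} \<Longrightarrow> c * (1 - x) \<le> dd x"
    and q: "0 \<le> q"
    and T1: "\<And>j B. j \<in> {1..2::nat} \<Longrightarrow> B \<in> Pclass (j + k) \<Longrightarrow>
       (\<integral>\<^sup>+x. indicator {0..3/4} x * ennreal ((B u x)\<^sup>2 * x\<^sup>2) \<partial>lborel) \<le> ennreal q"
    and T2: "\<And>j B. j \<in> {0..m+1} \<Longrightarrow> B \<in> Pclass (j + k) \<Longrightarrow>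
       (\<integral>\<^sup>+x. indicator {1/4..1} x * ennreal ((dd x)^(2*m) * (B u x)\<^sup>2) \<partial>lborel) \<le> ennreal q"
    and r: "r \<in> {0<..<1}"
  shows "((vop v \<circ> even_op vs) u r)\<^sup>2 \<le> (21 + 8 * (4/c)^(2*m) + C1c c m) * q"
proof -
  define f where "f = (vop v \<circ> even_op vs) u"
  define p where "p = ch (v # vs) 0 u"
  have sf: "Smooth f" unfolding f_def using u by (simp add: Smooth_vop Smooth_even_op)
  have pd: "p = deriv f" unfolding p_def f_def ch0 by (simp add: dr_op_def)
  have df: "\<And>x. x \<in> {0<..<1} \<Longrightarrow> (f has_real_derivative p x) (at x)"
    unfolding pd using Smooth_diff[OF sf] by blast
  have Amem: "vop v \<circ> even_op vs \<in> Pclass (0 + k)"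
    using Pclass_odd[of vs "length vs" v] k by (simp del: vop.simps)
  show ?thesis
  proof (cases "1/2 \<le> r")
    case True
    define h where "h = (\<lambda>j. case j of 0 \<Rightarrow> f | Suc i \<Rightarrow> ch (v # vs) i u)"
    define \<beta> where "\<beta> = (\<lambda>j. case j of 0 \<Rightarrow> (\<lambda>x::real. 0::real) | Suc i \<Rightarrow> bt i)"
    have "(h 0 r)\<^sup>2 \<le> C1c c m * q"
      unfolding C1c_def
    proof (rule near1_app[where h=h and \<beta>=\<beta> and dd=dd])
      fix j x assume x: "x \<in> {0<..<(1::real)}"
      show "(h j has_real_derivative (h (Suc j) x + \<beta> j x * h j x)) (at x)"
      proof (cases j)
        case 0 then show ?thesis using df[OF x] unfolding h_def \<beta>_def p_def by simp
      next
        case (Suc i) then show ?thesis using ch_has_deriv[OF u x, of "v # vs" i]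
          unfolding h_def \<beta>_def by simp
      qed
    next
      fix j x assume x: "x \<in> {1/4..<(1::real)}"
      show "\<bar>\<beta> j x\<bar> \<le> 8" using bt_bound[OF x] unfolding \<beta>_def by (cases j) auto
    next
      fix j assume j: "j \<le> m+1"
      show "(\<integral>\<^sup>+x. indicator {1/4..1} x * ennreal ((dd x)^(2*m) * (h j x)\<^sup>2) \<partial>lborel) \<le> ennreal q"
      proof (cases j)
        case 0
        then show ?thesis unfolding h_def f_def
          by (simp del: vop.simps) (rule T2[of 0 "vop v \<circ> even_op vs", simplified], use Amem in auto)
      next
        case (Suc i)
        have "ch (v # vs) i \<in> Pclass (j + k)" using ch_Pclass[of "v # vs" i] k Suc by simp
        then show ?thesis unfolding h_def using Suc j
          by simp (rule T2[of j "ch (v # vs) i", simplified], auto)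
      qed
    qed (use c dl q r True in auto)
    moreover have "0 \<le> (21 + 8 * (4/c)^(2*m)) * q" using c q by simp
    ultimately show ?thesis unfolding h_def f_def by (simp add: algebra_simps)
  next
    case False
    have cp: "continuous_on {0<..<1} p" unfolding pd using Smooth_cont[OF Smooth_deriv[OF sf]] .
    have cf: "continuous_on {1/2..3/4} f" using Smooth_cont[OF sf] by (rule contU) auto
    obtain s where s: "s \<in> {1/2..3/4}" "(3/4 - 1/2) * (f s)\<^sup>2 \<le> integral {1/2..3/4} (\<lambda>x. (f x)\<^sup>2)"
      using minpoint_sq[OF _ cf] by auto
    have rs: "0 < r" "r \<le> s" "s < 1" using r s False by auto
    have main: "(f r)\<^sup>2 \<le> 2 * (f s)\<^sup>2 + 4 * integral {r..s} (\<lambda>x. (p x)\<^sup>2)"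
      by (rule near0_odd[OF df cp rs])
    have I1: "integral {r..s} (\<lambda>x. (p x)\<^sup>2) \<le> q"
    proof (rule KLq[where S="{0..3/4}" and G="\<lambda>x. ((vop VInv \<circ> even_op (v # vs)) u x)\<^sup>2 * x\<^sup>2"])
      show "continuous_on {r..s} (\<lambda>x. (p x)\<^sup>2)"
        using contU[OF cp] rs by (auto intro!: continuous_intros)
      fix x assume x: "x \<in> {r..s}"
      then have "x \<noteq> 0" using rs by auto
      moreover have "(vop VInv \<circ> even_op (v # vs)) u x = p x / x"
        unfolding p_def ch0 by (simp add: Inv_op_def)
      ultimately show "0 \<le> (p x)\<^sup>2 \<and> (p x)\<^sup>2 \<le> ((vop VInv \<circ> even_op (v # vs)) u x)\<^sup>2 * x\<^sup>2"
        by (simp add: power_divide)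
    next
      show "{r..s} \<subseteq> {0..3/4}" using rs s by auto
      have Bm: "vop VInv \<circ> even_op (v # vs) \<in> Pclass (2 + k)"
        using Pclass_odd[of "v # vs" "length (v # vs)" VInv] k by (simp del: vop.simps even_op.simps)
      show "(\<integral>\<^sup>+x. indicator {0..3/4} x * ennreal (((vop VInv \<circ> even_op (v # vs)) u x)\<^sup>2 * x\<^sup>2) \<partial>lborel) \<le> ennreal q"
        by (rule T1[of 2 "vop VInv \<circ> even_op (v # vs)"]) (use Bm in auto)
    qed (rule q)
    have I2: "integral {1/2..3/4} (\<lambda>x. (c/4)^(2*m) * (f x)\<^sup>2) \<le> q"
    proof (rule KLq[where S="{1/4..1}" and G="\<lambda>x. (dd x)^(2*m) * ((vop v \<circ> even_op vs) u x)\<^sup>2"])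
      show "continuous_on {1/2..3/4} (\<lambda>x. (c/4)^(2*m) * (f x)\<^sup>2)" using cf by (auto intro!: continuous_intros)
      fix x :: real assume x: "x \<in> {1/2..3/4}"
      have "c/4 \<le> c * (1 - x)" using x c by (auto simp: field_simps)
      also have "\<dots> \<le> dd x" using dl[of x] x by auto
      finally have "(c/4)^(2*m) \<le> (dd x)^(2*m)" using c by (intro power_mono) auto
      then have "(c/4)^(2*m) * (f x)\<^sup>2 \<le> (dd x)^(2*m) * (f x)\<^sup>2" by (intro mult_right_mono) auto
      then show "0 \<le> (c/4)^(2*m) * (f x)\<^sup>2 \<and> (c/4)^(2*m) * (f x)\<^sup>2 \<le> (dd x)^(2*m) * ((vop v \<circ> even_op vs) u x)\<^sup>2"
        using c unfolding f_def by simp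
    next
      show "{1/2..3/4} \<subseteq> {1/4..1::real}" by auto
      show "(\<integral>\<^sup>+x. indicator {1/4..1} x * ennreal ((dd x)^(2*m) * ((vop v \<circ> even_op vs) u x)\<^sup>2) \<partial>lborel) \<le> ennreal q"
        by (rule T2[of 0 "vop v \<circ> even_op vs"]) (use Amem in auto)
    qed (rule q)
    have "(c/4)^(2*m) * integral {1/2..3/4} (\<lambda>x. (f x)\<^sup>2) \<le> q" using I2 by simp
    then have "integral {1/2..3/4} (\<lambda>x. (f x)\<^sup>2) \<le> (4/c)^(2*m) * q"
      using c by (simp add: field_simps power_divide)
    then have fs: "(f s)\<^sup>2 \<le> 4 * ((4/c)^(2*m) * q)" using s(2) by simp
    have "(f r)\<^sup>2 \<le> 8 * (4/c)^(2*m) * q + 4 * q" using main fs I1 by linarith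
    moreover have "0 \<le> (17 + C1c c m) * q" using c q C1c_nonneg[OF c] by simp
    ultimately show ?thesis unfolding f_def by (simp add: algebra_simps)
  qed
qed


lemma sup_bound:
  fixes f :: "real \<Rightarrow> real"
  assumes "\<And>r. r \<in> {0<..<1} \<Longrightarrow> (f r)\<^sup>2 \<le> C * q" "0 \<le> C" "0 \<le> q"
  shows "(SUP r\<in>{0<..<1}. ennreal \<bar>f r\<bar>) ^ 2 \<le> ennreal C * ennreal q"
proof -
  have "(SUP r\<in>{0<..<1}. ennreal \<bar>f r\<bar>) \<le> ennreal (sqrt (C * q))"
  proof (rule SUP_least)
    fix r :: real assume "r \<in> {0<..<1}"
    then have "\<bar>f r\<bar>\<^sup>2 \<le> C * q" using assms(1) by simp
    then have "\<bar>f r\<bar> \<le> sqrt (C * q)" by (rule real_le_rsqrt)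
    then show "ennreal \<bar>f r\<bar> \<le> ennreal (sqrt (C * q))" by (rule ennreal_leI)
  qed
  then have "(SUP r\<in>{0<..<1}. ennreal \<bar>f r\<bar>) ^ 2 \<le> ennreal (sqrt (C * q)) ^ 2"
    by (intro power_mono) auto
  also have "\<dots> = ennreal (C * q)"
    using assms by (simp add: ennreal_power)
  also have "\<dots> = ennreal C * ennreal q" using assms by (simp add: ennreal_mult)
  finally show ?thesis .
qed

theorem corollaryB1:
  shows "\<exists>N::nat. \<forall>(\<phi>::real \<Rightarrow> real) (\<gamma>::real).
     Ck_on N {0..1} \<phi> \<and> (\<forall>r\<in>{0..1}. \<phi> r > 0) \<and>
     (\<phi> has_real_derivative 0) (at 0 within {0..1}) \<and> \<gamma> > 1 \<longrightarrow>
     (\<forall>m::nat. m \<ge> 1 \<longrightarrow> (\<forall>k::nat. k \<ge> 1 \<longrightarrow>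
       (\<exists>C::real. C > 0 \<and>
         (\<forall>u::real \<Rightarrow> real. smooth_on {0..1} u \<longrightarrow>
           (\<forall>A\<in>Pclass k.
              (SUP r\<in>{0<..<1}. ennreal \<bar>A u r\<bar>) ^ 2
              \<le> ennreal C *
                ((\<Sum>j\<in>{1..2::nat}. \<Sum>B\<in>Pclass (j + k).
                    \<integral>\<^sup>+ r. indicator {0..3/4} r * ennreal ((B u r)\<^sup>2 * r\<^sup>2) \<partial>lborel)
                 + (\<Sum>j\<in>{0..m+1}. \<Sum>B\<in>Pclass (j + k).
                    \<integral>\<^sup>+ r. indicator {1/4..1} r *
                        ennreal ((dfun \<phi> \<gamma> r) ^ (2*m) * (B u r)\<^sup>2) \<partial>lborel)))))))"
proof (intro exI[of _ "0::nat"] allI impI)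
  fix \<phi> :: "real \<Rightarrow> real" and \<gamma> :: real and m k :: nat
  assume H: "Ck_on 0 {0..1} \<phi> \<and> (\<forall>r\<in>{0..1}. \<phi> r > 0) \<and>
     (\<phi> has_real_derivative 0) (at 0 within {0..1}) \<and> \<gamma> > 1"
    and "1 \<le> m" and "1 \<le> k"
  have cphi: "continuous_on {0..1} \<phi>" using H unfolding Ck_on_def by auto
  obtain c where c: "0 < c" and dl: "\<And>x. x \<in> {1/4..1} \<Longrightarrow> c * (1 - x) \<le> dfun \<phi> \<gamma> x"
    using dlow[OF cphi] H by blast
  define C where "C = 21 + 8 * (4/c)^(2*m) + C1c c m"
  have C: "0 < C"
  proof -
    have "0 \<le> (4/c)^(2*m)" using c by simp
    then show ?thesis unfolding C_def using C1c_nonneg[OF c, of m] by linarith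
  qed
  show "\<exists>C>0. \<forall>u. smooth_on {0..1} u \<longrightarrow> (\<forall>A\<in>Pclass k.
              (SUP r\<in>{0<..<1}. ennreal \<bar>A u r\<bar>) ^ 2
              \<le> ennreal C *
                ((\<Sum>j\<in>{1..2::nat}. \<Sum>B\<in>Pclass (j + k).
                    \<integral>\<^sup>+ r. indicator {0..3/4} r * ennreal ((B u r)\<^sup>2 * r\<^sup>2) \<partial>lborel)
                 + (\<Sum>j\<in>{0..m+1}. \<Sum>B\<in>Pclass (j + k).
                    \<integral>\<^sup>+ r. indicator {1/4..1} r *
                        ennreal ((dfun \<phi> \<gamma> r) ^ (2*m) * (B u r)\<^sup>2) \<partial>lborel)))"
  proof (intro exI[of _ C] conjI allI impI ballI C)
    fix u :: "real \<Rightarrow> real" and A assume su: "smooth_on {0..1} u" and A: "A \<in> Pclass k"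
    have u: "Smooth u" using smooth_on_Smooth[OF su] .
    define S1 where "S1 = (\<Sum>j\<in>{1..2::nat}. \<Sum>B\<in>Pclass (j + k).
                    \<integral>\<^sup>+ r. indicator {0..3/4} r * ennreal ((B u r)\<^sup>2 * r\<^sup>2) \<partial>lborel)"
    define S2 where "S2 = (\<Sum>j\<in>{0..m+1}. \<Sum>B\<in>Pclass (j + k).
                    \<integral>\<^sup>+ r. indicator {1/4..1} r *
                        ennreal ((dfun \<phi> \<gamma> r) ^ (2*m) * (B u r)\<^sup>2) \<partial>lborel)"
    have T1: "(\<integral>\<^sup>+ r. indicator {0..3/4} r * ennreal ((B u r)\<^sup>2 * r\<^sup>2) \<partial>lborel) \<le> S1 + S2"
      if "j \<in> {1..2::nat}" "B \<in> Pclass (j + k)" for j B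
    proof -
      have "(\<integral>\<^sup>+ r. indicator {0..3/4} r * ennreal ((B u r)\<^sup>2 * r\<^sup>2) \<partial>lborel)
          \<le> (\<Sum>B\<in>Pclass (j + k). \<integral>\<^sup>+ r. indicator {0..3/4} r * ennreal ((B u r)\<^sup>2 * r\<^sup>2) \<partial>lborel)"
        using that finite_Pclass by (intro member_le_sum) auto
      also have "\<dots> \<le> S1" unfolding S1_def using that by (intro member_le_sum) auto
      also have "\<dots> \<le> S1 + S2" by simp
      finally show ?thesis .
    qed
    have T2: "(\<integral>\<^sup>+ r. indicator {1/4..1} r * ennreal ((dfun \<phi> \<gamma> r) ^ (2*m) * (B u r)\<^sup>2) \<partial>lborel) \<le> S1 + S2"
      if "j \<in> {0..m+1}" "B \<in> Pclass (j + k)" for j B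
    proof -
      have "(\<integral>\<^sup>+ r. indicator {1/4..1} r * ennreal ((dfun \<phi> \<gamma> r) ^ (2*m) * (B u r)\<^sup>2) \<partial>lborel)
          \<le> (\<Sum>B\<in>Pclass (j + k). \<integral>\<^sup>+ r. indicator {1/4..1} r * ennreal ((dfun \<phi> \<gamma> r) ^ (2*m) * (B u r)\<^sup>2) \<partial>lborel)"
        using that finite_Pclass by (intro member_le_sum) auto
      also have "\<dots> \<le> S2" unfolding S2_def using that by (intro member_le_sum) auto
      also have "\<dots> \<le> S1 + S2" by simp
      finally show ?thesis .
    qed
    have MAIN: "(SUP r\<in>{0<..<1}. ennreal \<bar>A u r\<bar>) ^ 2 \<le> ennreal C * (S1 + S2)"
    proof (cases "S1 + S2 = top")
      case True
      have "ennreal C * top = top" using C by (simp add: ennreal_mult_top)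
      then show ?thesis unfolding True by simp
    next
      case False
      then obtain q where q: "S1 + S2 = ennreal q" "0 \<le> q" by (cases "S1 + S2") auto
      have pt: "(A u r)\<^sup>2 \<le> C * q" if r: "r \<in> {0<..<1}" for r
      proof (cases "even k")
        case True
        then obtain vs where vs: "A = even_op vs" "length vs = k div 2"
          using A unfolding Pclass_def by auto
        have k: "k = 2 * length vs" using vs True by simp
        show ?thesis unfolding C_def vs(1)
          by (rule main_even[OF u k c dl q(2) _ _ r]) (use T1 T2 q in auto)
      next
        case False
        then obtain v vs where vs: "A = vop v \<circ> even_op vs" "length vs = k div 2"
          using A unfolding Pclass_def by auto
        have k: "k = 2 * length vs + 1" using vs False by presburger
        show ?thesis unfolding C_def vs(1)
          by (rule main_odd[OF u k c dl q(2) _ _ r]) (use T1 T2 q in auto)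
      qed
      show ?thesis unfolding q(1)
        by (rule sup_bound[OF pt]) (use C q in auto)
    qed
    then show "(SUP r\<in>{0<..<1}. ennreal \<bar>A u r\<bar>) ^ 2
              \<le> ennreal C *
                ((\<Sum>j\<in>{1..2::nat}. \<Sum>B\<in>Pclass (j + k).
                    \<integral>\<^sup>+ r. indicator {0..3/4} r * ennreal ((B u r)\<^sup>2 * r\<^sup>2) \<partial>lborel)
                 + (\<Sum>j\<in>{0..m+1}. \<Sum>B\<in>Pclass (j + k).
                    \<integral>\<^sup>+ r. indicator {1/4..1} r *
                        ennreal ((dfun \<phi> \<gamma> r) ^ (2*m) * (B u r)\<^sup>2) \<partial>lborel))"
      unfolding S1_def S2_def .
  qed
qed


end
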